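(* Let $k\ge 2$, let $B=M\cup\{\omega_1,\ldots,\omega_p\}$ with $p\ge 1$ and $\omega_1,\ldots,\omega_p\in P_k\setminus M$, and let $F$ be a finite system of functions from $P_k(n)$. Then $$I_B(F)\le\left\lceil \log_{u(B)}\bigl(d(F)+1\bigr)\right\rceil .$$
   Context: Let $k\ge 2$ be an integer and $E_k=\{0,1,\ldots,k-1\}$. $P_k(n)$ denotes the set of all functions $E_k^n\to E_k$, and $P_k=\bigcup_n P_k(n)$. Tuples in $E_k^n$ are ordered componentwise: $\tilde\alpha\le\tilde\beta$ iff $\alpha_j\le\beta_j$ for all $j$. A function $f$ is monotone if $\tilde\alpha\le\tilde\beta$ implies $f(\tilde\alpha)\le f(\tilde\beta)$; $M$ is the set of all monotone functions in $P_k$ (of all arities, including constants). A basis is a set $B=M\cup\{\omega_1,\ldots,\omega_p\}$ with $p\ge1$ and $\omega_i\in P_k\setminus M$. A circuit over $B$ with inputs $x_1,\ldots,x_n$ is a finite directed acyclic graph whose source nodes are labelled by the variables $x_1,\ldots,x_n$ and each of whose other nodes (gates) is labelled by a $q$-ary function from $B$ and has $q$ ordered incoming edges; each node computes a function of $P_k(n)$ in the obvious way. A circuit realizes a system $F$ of functions of $x_1,\ldots,x_n$ if every function of $F$ is computed at some node. Gates labelled by functions of $M$ have weight $0$, gates labelled by some $\omega_i$ have weight $1$. The non-monotone complexity $I_B(S)$ of a circuit $S$ is the sum of the weights of its gates; $I_B(F)$ is the minimum of $I_B(S)$ over all circuits $S$ over $B$ realizing $F$. A chain is a sequence $\tilde\alpha_1,\ldots,\tilde\alpha_r$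 of pairwise distinct tuples of $E_k^n$ with $\tilde\alpha_i\le\tilde\alpha_{i+1}$ for $i=1,\ldots,r-1$. A pair $(\tilde\alpha,\tilde\beta)$ with $\tilde\alpha\le\tilde\beta$ is a jump for a system $F$ if $f(\tilde\alpha)>f(\tilde\beta)$ for at least one $f\in F$. For a chain $C=(\tilde\alpha_1,\ldots,\tilde\alpha_r)$, the decrease $d_C(F)$ is the number of $i\in\{1,\ldots,r-1\}$ such that $(\tilde\alpha_i,\tilde\alpha_{i+1})$ is a jump for $F$. The decrease $d(F)$ is the maximum of $d_C(F)$ over all chains $C$ in $E_k^n$. For $f\in P_k(n)$ and a chain $C=(\tilde\alpha_1,\ldots,\tilde\alpha_r)$ in $E_k^n$, $u_C(f)$ is the maximum length $t$ of a subsequence $\tilde\beta_1,\ldots,\tilde\beta_t$ of $C$ (taken in the order of $C$) with $f(\tilde\beta_1)>f(\tilde\beta_2)>\cdots>f(\tilde\beta_t)$. The inversion power $u(f)$ is the maximum of $u_C(f)$ over all chains $C$ in $E_k^n$, and the inversion power of the basis is $u(B)=\max\{u(f): f\in B\}$ (note $u(B)\ge 2$ since $B$ contains a non-monotone function). *)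

theory Defs
  imports Complex_Main "HOL-Library.Sublist"
begin

definition tuples :: "nat \<Rightarrow> nat \<Rightarrow> nat list set" where
  "tuples k n = {xs. length xs = n \<and> (\<forall>x\<in>set xs. x < k)}"

definition tle :: "nat list \<Rightarrow> nat list \<Rightarrow> bool" where
  "tle a b \<longleftrightarrow> list_all2 (\<le>) a b"

definition in_Pk :: "nat \<Rightarrow> nat \<Rightarrow> (nat list \<Rightarrow> nat) \<Rightarrow> bool" where
  "in_Pk k q g \<longleftrightarrow> (\<forall>a\<in>tuples k q. g a < k)"

definition monotone_k :: "nat \<Rightarrow> nat \<Rightarrow> (nat list \<Rightarrow> nat) \<Rightarrow> bool" where
  "monotone_k k q g \<longleftrightarrow> (\<forall>a\<in>tuples k q. \<forall>b\<in>tuples k q. tle a b \<longrightarrow> g a \<le> g b)"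

(* M: monotone functions of P_k, all arities; elements are (arity, function) *)
definition monoset :: "nat \<Rightarrow> (nat \<times> (nat list \<Rightarrow> nat)) set" where
  "monoset k = {(q, g). in_Pk k q g \<and> monotone_k k q g}"

definition is_chain :: "nat \<Rightarrow> nat \<Rightarrow> nat list list \<Rightarrow> bool" where
  "is_chain k n C \<longleftrightarrow> distinct C \<and> set C \<subseteq> tuples k n \<and>
     (\<forall>i. Suc i < length C \<longrightarrow> tle (C ! i) (C ! Suc i))"

definition is_jump :: "(nat list \<Rightarrow> nat) set \<Rightarrow> nat list \<Rightarrow> nat list \<Rightarrow> bool" where
  "is_jump F a b \<longleftrightarrow> tle a b \<and> (\<exists>f\<in>F. f a > f b)"

definition decrease_chain :: "(nat list \<Rightarrow> nat) set \<Rightarrow> nat list list \<Rightarrow> nat" where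
  "decrease_chain F C = card {i. Suc i < length C \<and> is_jump F (C ! i) (C ! Suc i)}"

definition decrease :: "nat \<Rightarrow> nat \<Rightarrow> (nat list \<Rightarrow> nat) set \<Rightarrow> nat" where
  "decrease k n F = Max {decrease_chain F C | C. is_chain k n C}"

definition inv_chain :: "(nat list \<Rightarrow> nat) \<Rightarrow> nat list list \<Rightarrow> nat" where
  "inv_chain f C = Max {length ys | ys. subseq ys C \<and> sorted_wrt (\<lambda>a b. f a > f b) ys}"

definition inv_power :: "nat \<Rightarrow> nat \<Rightarrow> (nat list \<Rightarrow> nat) \<Rightarrow> nat" where
  "inv_power k q f = Max {inv_chain f C | C. is_chain k q C}"

(* the basis B = M \<union> {\<omega>_1..\<omega>_p}; the \<omega>_i are given as a list of (arity, function) *)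
definition basis :: "nat \<Rightarrow> (nat \<times> (nat list \<Rightarrow> nat)) list \<Rightarrow> (nat \<times> (nat list \<Rightarrow> nat)) set" where
  "basis k oms = monoset k \<union> set oms"

definition inv_power_basis :: "nat \<Rightarrow> (nat \<times> (nat list \<Rightarrow> nat)) list \<Rightarrow> nat" where
  "inv_power_basis k oms = Max {inv_power k q f | q f. (q, f) \<in> basis k oms}"

(* circuits: list of gates in topological order. Nodes 0..n-1 are the inputs x_1..x_n,
   node n+j is gate j. A gate is a label together with the ordered list of its input nodes. *)
datatype glabel = Mon "nat list \<Rightarrow> nat" | Om nat

type_synonym circuit = "(glabel \<times> nat list) list"

fun gate_fun :: "(nat \<times> (nat list \<Rightarrow> nat)) list \<Rightarrow> glabel \<Rightarrow> nat list \<Rightarrow> nat" where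
  "gate_fun oms (Mon g) args = g args"
| "gate_fun oms (Om i) args = snd (oms ! i) args"

definition wf_circuit ::
  "nat \<Rightarrow> (nat \<times> (nat list \<Rightarrow> nat)) list \<Rightarrow> nat \<Rightarrow> circuit \<Rightarrow> bool" where
  "wf_circuit k oms n C \<longleftrightarrow>
     (\<forall>j < length C. (\<forall>m \<in> set (snd (C ! j)). m < n + j) \<and>
        (case fst (C ! j) of
           Mon g \<Rightarrow> (length (snd (C ! j)), g) \<in> monoset k
         | Om i \<Rightarrow> i < length oms \<and> fst (oms ! i) = length (snd (C ! j))))"

definition node_vals :: "(nat \<times> (nat list \<Rightarrow> nat)) list \<Rightarrow> circuit \<Rightarrow> nat list \<Rightarrow> nat list" where
  "node_vals oms C x =
     foldl (\<lambda>vs (l, ins). vs @ [gate_fun oms l (map (\<lambda>m. vs ! m) ins)]) x C"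

definition realizes ::
  "nat \<Rightarrow> (nat \<times> (nat list \<Rightarrow> nat)) list \<Rightarrow> nat \<Rightarrow> circuit \<Rightarrow> (nat list \<Rightarrow> nat) set \<Rightarrow> bool" where
  "realizes k oms n C F \<longleftrightarrow>
     (\<forall>f\<in>F. \<exists>m < n + length C. \<forall>x\<in>tuples k n. node_vals oms C x ! m = f x)"

definition weight :: "circuit \<Rightarrow> nat" where
  "weight C = length (filter (\<lambda>(l, ins). case l of Om _ \<Rightarrow> True | Mon _ \<Rightarrow> False) C)"

definition complexity ::
  "nat \<Rightarrow> (nat \<times> (nat list \<Rightarrow> nat)) list \<Rightarrow> nat \<Rightarrow> (nat list \<Rightarrow> nat) set \<Rightarrow> nat" where
  "complexity k oms n F =
     (LEAST w. \<exists>C. wf_circuit k oms n C \<and> realizes k oms n C F \<and> weight C = w)"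

end

theory Submission
  imports Defs
begin

lemma tle_trans: "tle a b \<Longrightarrow> tle b c \<Longrightarrow> tle a c"
  unfolding tle_def by (rule list_all2_trans[of "(\<le>)" "(\<le>)" "(\<le>)"]) auto

lemma tle_refl: "tle a a"
  unfolding tle_def by (simp add: list_all2_refl)

lemma tle_antisym: "tle a b \<Longrightarrow> tle b a \<Longrightarrow> a = b"
  unfolding tle_def by (rule list_all2_antisym) auto

lemma finite_tuples: "finite (tuples k n)"
proof -
  have "tuples k n \<subseteq> {xs. set xs \<subseteq> {..<k} \<and> length xs = n}"
    unfolding tuples_def by auto
  then show ?thesis using finite_lists_length_eq[of "{..<k}" n] finite_subset by blast
qed

lemma chain_le:
  assumes "is_chain k n C" "i \<le> j" "j < length C"
  shows "tle (C ! i) (C ! j)"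
  using assms(2,3)
proof (induction j)
  case 0 then show ?case by (simp add: tle_refl)
next
  case (Suc j)
  show ?case
  proof (cases "i = Suc j")
    case True then show ?thesis by (simp add: tle_refl)
  next
    case False
    then have "tle (C ! i) (C ! j)" using Suc by auto
    moreover have "tle (C ! j) (C ! Suc j)" using assms(1) Suc.prems unfolding is_chain_def by auto
    ultimately show ?thesis by (rule tle_trans)
  qed
qed

lemma chain_sorted: "is_chain k n C \<Longrightarrow> sorted_wrt tle C"
  unfolding sorted_wrt_iff_nth_less using chain_le by (metis less_imp_le)

lemma chain_last: "is_chain k n C \<Longrightarrow> C \<noteq> [] \<Longrightarrow> y \<in> set C \<Longrightarrow> tle y (last C)"
proof -
  assume a: "is_chain k n C" "C \<noteq> []" "y \<in> set C"
  then obtain i where i: "i < length C" "y = C ! i" by (auto simp: in_set_conv_nth)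
  have "last C = C ! (length C - 1)" using a(2) by (simp add: last_conv_nth)
  moreover have "i \<le> length C - 1" "length C - 1 < length C" using i by auto
  ultimately show ?thesis using chain_le[OF a(1)] i by simp
qed

lemma subseq_sorted: "subseq xs ys \<Longrightarrow> sorted_wrt R ys \<Longrightarrow> sorted_wrt R xs"
proof (induction rule: list_emb.induct)
  case (list_emb_Cons2 x y xs ys)
  then show ?case by (auto elim: list_emb_set)
qed auto

lemma subseq_set: "subseq xs ys \<Longrightarrow> set xs \<subseteq> set ys"
  by (auto elim: list_emb_set)

lemma chain_length: "is_chain k n C \<Longrightarrow> length C \<le> card (tuples k n)"
  unfolding is_chain_def by (metis card_mono distinct_card finite_tuples)

lemma decrease_chain_le: "decrease_chain F C \<le> length C"
proof -
  have "{i. Suc i < length C \<and> is_jump F (C ! i) (C ! Suc i)} \<subseteq> {..<length C}" by auto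
  then show ?thesis unfolding decrease_chain_def by (metis card_lessThan card_mono finite_lessThan)
qed

lemma finite_dec: "finite {decrease_chain F C | C. is_chain k n C}"
proof -
  have "{decrease_chain F C | C. is_chain k n C} \<subseteq> {..card (tuples k n)}"
    using decrease_chain_le chain_length by (auto intro: le_trans[OF decrease_chain_le])
  then show ?thesis using finite_subset by blast
qed

lemma dec_ge: "is_chain k n C \<Longrightarrow> decrease_chain F C \<le> decrease k n F"
  unfolding decrease_def using finite_dec by (auto intro: Max_ge)

lemma decrease_chain_snoc:
  assumes "C \<noteq> []"
  shows "decrease_chain F (C @ [x]) = decrease_chain F C + (if is_jump F (last C) x then 1 else 0)"
proof -
  let ?L = "length C"
  let ?S = "{i. Suc i < ?L \<and> is_jump F (C ! i) (C ! Suc i)}"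
  let ?T = "{i. i = ?L - 1 \<and> is_jump F (last C) x}"
  have eq: "{i. Suc i < length (C @ [x]) \<and> is_jump F ((C @ [x]) ! i) ((C @ [x]) ! Suc i)} = ?S \<union> ?T"
  proof (rule set_eqI)
    fix i
    show "i \<in> {i. Suc i < length (C @ [x]) \<and> is_jump F ((C @ [x]) ! i) ((C @ [x]) ! Suc i)} \<longleftrightarrow> i \<in> ?S \<union> ?T"
    proof (cases "Suc i < ?L")
      case True then show ?thesis by (auto simp: nth_append)
    next
      case False
      have "?L > 0" using assms by simp
      then show ?thesis using False
        by (cases "i = ?L - 1") (auto simp: nth_append last_conv_nth)
    qed
  qed
  have "card (?S \<union> ?T) = card ?S + card ?T"
    by (rule card_Un_disjoint) (auto intro: finite_subset[of _ "{..<?L}"])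
  moreover have "card ?T = (if is_jump F (last C) x then 1 else 0)" by auto
  ultimately show ?thesis unfolding decrease_chain_def eq by simp
qed

definition Dv :: "nat \<Rightarrow> nat \<Rightarrow> (nat list \<Rightarrow> nat) set \<Rightarrow> nat list \<Rightarrow> nat" where
  "Dv k n F x = Max {decrease_chain F C | C. is_chain k n C \<and> C \<noteq> [] \<and> last C = x}"

lemma Dv_fin: "finite {decrease_chain F C | C. is_chain k n C \<and> C \<noteq> [] \<and> last C = x}"
  by (rule finite_subset[OF _ finite_dec[of F k n]]) auto

lemma single_chain: "x \<in> tuples k n \<Longrightarrow> is_chain k n [x]"
  unfolding is_chain_def by auto

lemma Dv_le: assumes "x \<in> tuples k n" shows "Dv k n F x \<le> decrease k n F"
  unfolding Dv_def using Dv_fin single_chain[OF assms] dec_ge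
  by (subst Max_le_iff) fastforce+

lemma Dv_step:
  assumes x: "x \<in> tuples k n" and x': "x' \<in> tuples k n" and le: "tle x' x" and ne: "x' \<noteq> x"
  shows "Dv k n F x' + (if is_jump F x' x then 1 else 0) \<le> Dv k n F x"
proof -
  let ?A = "\<lambda>x. {decrease_chain F C | C. is_chain k n C \<and> C \<noteq> [] \<and> last C = x}"
  have "Dv k n F x' \<in> ?A x'" unfolding Dv_def
    using Dv_fin single_chain[OF x'] by (intro Max_in) fastforce+
  then obtain C where C: "is_chain k n C" "C \<noteq> []" "last C = x'" "decrease_chain F C = Dv k n F x'"
    by auto
  have nin: "x \<notin> set C"
  proof
    assume "x \<in> set C"
    then have "tle x x'" using chain_last[OF C(1,2)] C(3) by auto
    then show False using tle_antisym le ne by blast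
  qed
  have ch: "is_chain k n (C @ [x])"
    unfolding is_chain_def
  proof (intro conjI allI impI)
    show "distinct (C @ [x])" using nin C(1) unfolding is_chain_def by simp
    show "set (C @ [x]) \<subseteq> tuples k n" using x C(1) unfolding is_chain_def by simp
    fix i assume i: "Suc i < length (C @ [x])"
    show "tle ((C @ [x]) ! i) ((C @ [x]) ! Suc i)"
    proof (cases "Suc i < length C")
      case True then show ?thesis using C(1) unfolding is_chain_def by (simp add: nth_append)
    next
      case False
      then have "i = length C - 1" "length C > 0" using i C(2) by auto
      then show ?thesis using le C(3) by (simp add: nth_append last_conv_nth)
    qed
  qed
  have "decrease_chain F (C @ [x]) \<in> ?A x" using ch by force
  then have "decrease_chain F (C @ [x]) \<le> Dv k n F x" unfolding Dv_def using Dv_fin by (intro Max_ge)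
  then show ?thesis using decrease_chain_snoc[OF C(2), of F x] C by simp
qed

lemma Dv_mono: "x \<in> tuples k n \<Longrightarrow> x' \<in> tuples k n \<Longrightarrow> tle x' x \<Longrightarrow> Dv k n F x' \<le> Dv k n F x"
  using Dv_step[of x k n x' F] by (cases "x' = x") auto

lemma Dv_jump: "x \<in> tuples k n \<Longrightarrow> x' \<in> tuples k n \<Longrightarrow> is_jump F x' x \<Longrightarrow> Dv k n F x' < Dv k n F x"
  using Dv_step[of x k n x' F] by (cases "x' = x") (auto simp: is_jump_def)

lemma dec_distinct: "sorted_wrt (\<lambda>a b. (f b::nat) < f a) ys \<Longrightarrow> distinct (map f ys)"
proof (induction ys)
  case (Cons a ys)
  have "f a \<notin> f ` set ys"
  proof
    assume "f a \<in> f ` set ys"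
    then obtain y where y: "y \<in> set ys" "f a = f y" by auto
    have "f y < f a" using Cons.prems y(1) by simp
    then show False using y(2) by simp
  qed
  then show ?case using Cons by simp
qed simp

lemma dec_len:
  assumes "sorted_wrt (\<lambda>a b. f b < f a) ys" "\<forall>y\<in>set ys. f y < k"
  shows "length ys \<le> k"
proof -
  have "length ys = card (set (map f ys))" using distinct_card[OF dec_distinct[OF assms(1)]] by simp
  also have "\<dots> \<le> card {..<k}" by (rule card_mono) (use assms(2) in auto)
  finally show ?thesis by simp
qed

lemma invc_fin: "finite {length ys | ys. subseq ys C \<and> sorted_wrt (\<lambda>a b. f a > f b) ys}"
  by (rule finite_subset[of _ "{..length C}"]) (auto dest: list_emb_length)

lemma invc_ge: "subseq ys C \<Longrightarrow> sorted_wrt (\<lambda>a b. f a > f b) ys \<Longrightarrow> length ys \<le> inv_chain f C"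
  unfolding inv_chain_def using invc_fin by (intro Max_ge) auto

lemma invc_le:
  assumes "in_Pk k q f" "is_chain k q C"
  shows "inv_chain f C \<le> k"
  unfolding inv_chain_def
proof (subst Max_le_iff)
  show "finite {length ys | ys. subseq ys C \<and> sorted_wrt (\<lambda>a b. f a > f b) ys}" by (rule invc_fin)
  show "{length ys | ys. subseq ys C \<and> sorted_wrt (\<lambda>a b. f a > f b) ys} \<noteq> {}" by auto
  show "\<forall>a\<in>{length ys | ys. subseq ys C \<and> sorted_wrt (\<lambda>a b. f a > f b) ys}. a \<le> k"
  proof safe
    fix ys assume ys: "subseq ys C" "sorted_wrt (\<lambda>a b. f a > f b) ys"
    have "\<forall>y\<in>set ys. f y < k" using subseq_set[OF ys(1)] assms unfolding is_chain_def in_Pk_def by auto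
    then show "length ys \<le> k" using dec_len ys(2) by blast
  qed
qed

lemma invp_fin:
  assumes "in_Pk k q f"
  shows "finite {inv_chain f C | C. is_chain k q C}"
  by (rule finite_subset[of _ "{..k}"]) (use invc_le[OF assms] in auto)

lemma nil_chain: "is_chain k q []" unfolding is_chain_def by auto

lemma invp_le: assumes "in_Pk k q f" shows "inv_power k q f \<le> k"
  unfolding inv_power_def using invp_fin[OF assms] invc_le[OF assms] nil_chain
  by (subst Max_le_iff) auto

lemma invp_ge: "in_Pk k q f \<Longrightarrow> is_chain k q C \<Longrightarrow> inv_chain f C \<le> inv_power k q f"
  unfolding inv_power_def using invp_fin by (intro Max_ge) auto

lemma mono_invp:
  assumes "in_Pk k q f" "monotone_k k q f"
  shows "inv_power k q f \<le> 1"
proof -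
  have "inv_chain f C \<le> 1" if C: "is_chain k q C" for C
    unfolding inv_chain_def
  proof (subst Max_le_iff)
    show "finite {length ys | ys. subseq ys C \<and> sorted_wrt (\<lambda>a b. f a > f b) ys}" by (rule invc_fin)
    show "{length ys | ys. subseq ys C \<and> sorted_wrt (\<lambda>a b. f a > f b) ys} \<noteq> {}" by auto
    show "\<forall>a\<in>{length ys | ys. subseq ys C \<and> sorted_wrt (\<lambda>a b. f a > f b) ys}. a \<le> 1"
    proof safe
      fix ys assume ys: "subseq ys C" "sorted_wrt (\<lambda>a b. f a > f b) ys"
      show "length ys \<le> 1"
      proof (rule ccontr)
        assume "\<not> length ys \<le> 1"
        then have l: "1 < length ys" by simp
        have st: "sorted_wrt tle ys" using subseq_sorted[OF ys(1) chain_sorted[OF C]] .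
        have "tle (ys ! 0) (ys ! 1)" using st l by (simp add: sorted_wrt_iff_nth_less)
        moreover have "ys ! 0 \<in> set ys" "ys ! 1 \<in> set ys" using l by (auto intro: nth_mem)
        then have "ys ! 0 \<in> tuples k q" "ys ! 1 \<in> tuples k q"
          using subseq_set[OF ys(1)] C unfolding is_chain_def by auto
        ultimately have "f (ys ! 0) \<le> f (ys ! 1)" using assms(2) unfolding monotone_k_def by blast
        moreover have "f (ys ! 0) > f (ys ! 1)" using ys(2) l by (simp add: sorted_wrt_iff_nth_less)
        ultimately show False by simp
      qed
    qed
  qed
  then show ?thesis unfolding inv_power_def using invp_fin[OF assms(1)] nil_chain
    by (subst Max_le_iff) auto
qed

lemma nonmono_invp:
  assumes "in_Pk k q f" "\<not> monotone_k k q f"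
  shows "2 \<le> inv_power k q f"
proof -
  obtain a b where ab: "a \<in> tuples k q" "b \<in> tuples k q" "tle a b" "f a > f b"
    using assms(2) unfolding monotone_k_def by (auto simp: not_le)
  then have "a \<noteq> b" by auto
  then have ch: "is_chain k q [a, b]" using ab unfolding is_chain_def
    by (auto simp: less_Suc_eq)
  have "length [a, b] \<le> inv_chain f [a, b]" using ab(4) by (intro invc_ge) auto
  also have "\<dots> \<le> inv_power k q f" by (rule invp_ge[OF assms(1) ch])
  finally show ?thesis by simp
qed

lemma basis_Pk: "\<forall>(q, w) \<in> set oms. in_Pk k q w \<Longrightarrow> (q, f) \<in> basis k oms \<Longrightarrow> in_Pk k q f"
  unfolding basis_def monoset_def by auto

lemma basis_fin:
  assumes "\<forall>(q, w) \<in> set oms. in_Pk k q w"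
  shows "finite {inv_power k q f | q f. (q, f) \<in> basis k oms}"
  by (rule finite_subset[of _ "{..k}"]) (use invp_le basis_Pk[OF assms] in fastforce, simp)

lemma get_omega:
  assumes "\<forall>(q, w) \<in> set oms. in_Pk k q w \<and> \<not> monotone_k k q w" "oms \<noteq> []"
  shows "\<exists>i q w ys. i < length oms \<and> oms ! i = (q, w) \<and> length ys = inv_power_basis k oms \<and>
     set ys \<subseteq> tuples k q \<and> sorted_wrt tle ys \<and> sorted_wrt (\<lambda>a b. w a > w b) ys \<and>
     2 \<le> inv_power_basis k oms"
proof -
  have P: "\<forall>(q, w) \<in> set oms. in_Pk k q w" using assms(1) by auto
  let ?S = "{inv_power k q f | q f. (q, f) \<in> basis k oms}"
  obtain q0 w0 where qw0: "(q0, w0) \<in> set oms" using assms(2)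
    by (metis list.set_sel(1) surj_pair)
  have "2 \<le> inv_power k q0 w0" using nonmono_invp assms(1) qw0 by auto
  also have "\<dots> \<le> inv_power_basis k oms"
    unfolding inv_power_basis_def using basis_fin[OF P] qw0 unfolding basis_def
    by (intro Max_ge) auto
  finally have u2: "2 \<le> inv_power_basis k oms" by simp
  have "inv_power_basis k oms \<in> ?S" unfolding inv_power_basis_def
    using basis_fin[OF P] qw0 unfolding basis_def by (intro Max_in) auto
  then obtain q w where qw: "(q, w) \<in> basis k oms" "inv_power k q w = inv_power_basis k oms" by auto
  have "(q, w) \<notin> monoset k"
  proof
    assume "(q, w) \<in> monoset k"
    then have "inv_power k q w \<le> 1" using mono_invp unfolding monoset_def by auto
    then show False using qw u2 by simp
  qed
  then have qws: "(q, w) \<in> set oms" using qw(1) unfolding basis_def by auto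
  then obtain i where i: "i < length oms" "oms ! i = (q, w)" by (metis in_set_conv_nth)
  have Pw: "in_Pk k q w" using P qws by auto
  have "inv_power k q w \<in> {inv_chain w C | C. is_chain k q C}" unfolding inv_power_def
    using invp_fin[OF Pw] nil_chain by (intro Max_in) auto
  then obtain C where C: "is_chain k q C" "inv_chain w C = inv_power k q w" by auto
  have "inv_chain w C \<in> {length ys | ys. subseq ys C \<and> sorted_wrt (\<lambda>a b. w a > w b) ys}"
    unfolding inv_chain_def using invc_fin by (intro Max_in) auto
  then obtain ys where ys: "subseq ys C" "sorted_wrt (\<lambda>a b. w a > w b) ys" "length ys = inv_chain w C"
    by auto
  show ?thesis
    apply (rule exI[of _ i], rule exI[of _ q], rule exI[of _ w], rule exI[of _ ys])
    using i ys C qw u2 subseq_set[OF ys(1)] subseq_sorted[OF ys(1) chain_sorted[OF C(1)]]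
    unfolding is_chain_def by auto
qed

lemma nv_snoc: "node_vals oms (C @ [(l, ins)]) x =
   node_vals oms C x @ [gate_fun oms l (map (\<lambda>m. node_vals oms C x ! m) ins)]"
  unfolding node_vals_def by simp

lemma nv_len: "length (node_vals oms C x) = length x + length C"
proof (induction C rule: rev_induct)
  case Nil then show ?case by (simp add: node_vals_def)
next
  case (snoc g C) then show ?case by (cases g) (simp add: nv_snoc)
qed

lemma nv_take: "take (length x) (node_vals oms C x) = x"
proof (induction C rule: rev_induct)
  case Nil then show ?case by (simp add: node_vals_def)
next
  case (snoc g C) then show ?case by (cases g) (simp add: nv_snoc nv_len)
qed

lemma wf_snoc: "wf_circuit k oms n (C @ [(l, ins)]) \<longleftrightarrow> wf_circuit k oms n C \<and>
   (\<forall>m\<in>set ins. m < n + length C) \<and>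
   (case l of Mon g \<Rightarrow> (length ins, g) \<in> monoset k
     | Om i \<Rightarrow> i < length oms \<and> fst (oms ! i) = length ins)"
proof -
  have e: "\<And>j. j < length C \<Longrightarrow> (C @ [(l, ins)]) ! j = C ! j" by (simp add: nth_append)
  have "(\<forall>j<length C. (\<forall>m\<in>set (snd ((C @ [(l, ins)]) ! j)). m < n + j) \<and>
        (case fst ((C @ [(l, ins)]) ! j) of
           Mon g \<Rightarrow> (length (snd ((C @ [(l, ins)]) ! j)), g) \<in> monoset k
         | Om i \<Rightarrow> i < length oms \<and> fst (oms ! i) = length (snd ((C @ [(l, ins)]) ! j)))) =
        (\<forall>j<length C. (\<forall>m\<in>set (snd (C ! j)). m < n + j) \<and>
        (case fst (C ! j) of
           Mon g \<Rightarrow> (length (snd (C ! j)), g) \<in> monoset k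
         | Om i \<Rightarrow> i < length oms \<and> fst (oms ! i) = length (snd (C ! j))))"
    using e by (auto cong: glabel.case_cong)
  then show ?thesis unfolding wf_circuit_def length_append_singleton All_less_Suc
    by (simp only: nth_append_length fst_conv snd_conv) blast
qed

lemma weight_append: "weight (C @ G) = weight C + weight G"
  unfolding weight_def by simp

lemma tle_prefix:
  assumes "tle (xs @ us) (ys @ vs)" "length xs = length ys"
  shows "tle xs ys" "tle us vs"
  using assms list_all2_append unfolding tle_def by blast+

lemma add_mon:
  assumes wf: "wf_circuit k oms n C" and k: "1 \<le> k"
    and lt: "\<forall>x\<in>tuples k n. \<phi> x < k"
    and cond: "\<forall>x\<in>tuples k n. \<forall>x'\<in>tuples k n.
        tle (node_vals oms C x') (node_vals oms C x) \<longrightarrow> \<phi> x' \<le> \<phi> x"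
  shows "\<exists>g. wf_circuit k oms n (C @ [(Mon g, [0..<n + length C])]) \<and>
     (\<forall>x\<in>tuples k n. node_vals oms (C @ [(Mon g, [0..<n + length C])]) x = node_vals oms C x @ [\<phi> x])"
proof -
  let ?T = "tuples k n"
  let ?V = "node_vals oms C"
  define S where "S y = insert 0 {\<phi> x | x. x \<in> ?T \<and> tle (?V x) y}" for y
  define g where "g y = Max (S y)" for y
  have finS: "finite (S y)" for y
    unfolding S_def by (rule finite_insert[THEN iffD2], rule finite_subset[of _ "\<phi> ` ?T"])
      (auto simp: finite_tuples)
  have gv: "g (?V x) = \<phi> x" if x: "x \<in> ?T" for x
    unfolding g_def
  proof (rule Max_eqI[OF finS])
    show "\<phi> x \<in> S (?V x)" unfolding S_def using x tle_refl by blast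
    fix y assume "y \<in> S (?V x)"
    then show "y \<le> \<phi> x" unfolding S_def using cond x by auto
  qed
  have mono: "(n + length C, g) \<in> monoset k"
    unfolding monoset_def in_Pk_def monotone_k_def
  proof (intro CollectI conjI ballI impI case_prodI)
    fix a assume "a \<in> tuples k (n + length C)"
    have "\<forall>y\<in>S a. y < k" unfolding S_def using lt k by auto
    moreover have "Max (S a) \<in> S a" using finS by (rule Max_in) (simp add: S_def)
    ultimately show "g a < k" unfolding g_def by blast
  next
    fix a b assume "tle a b"
    then have "S a \<subseteq> S b" unfolding S_def using tle_trans by blast
    then show "g a \<le> g b" unfolding g_def using finS by (intro Max_mono) (auto simp: S_def)
  qed
  show ?thesis
  proof (intro exI conjI ballI)
    show "wf_circuit k oms n (C @ [(Mon g, [0..<n + length C])])"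
      using wf mono by (simp add: wf_snoc)
    fix x assume x: "x \<in> ?T"
    then have len: "length (?V x) = n + length C" by (simp add: nv_len tuples_def)
    have "map (\<lambda>m. ?V x ! m) [0..<n + length C] = ?V x"
      using map_nth[of "?V x"] len by simp
    then show "node_vals oms (C @ [(Mon g, [0..<n + length C])]) x = ?V x @ [\<phi> x]"
      by (simp add: nv_snoc gv[OF x])
  qed
qed

lemma add_mons:
  assumes wf: "wf_circuit k oms n C" and k: "1 \<le> k"
    and P: "\<forall>\<phi>\<in>set \<phi>s. (\<forall>x\<in>tuples k n. \<phi> x < k) \<and> (\<forall>x\<in>tuples k n. \<forall>x'\<in>tuples k n.
        tle (node_vals oms C x') (node_vals oms C x) \<longrightarrow> \<phi> x' \<le> \<phi> x)"
  shows "\<exists>G. wf_circuit k oms n (C @ G) \<and> weight G = 0 \<and> length G = length \<phi>s \<and>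
     (\<forall>x\<in>tuples k n. node_vals oms (C @ G) x = node_vals oms C x @ map (\<lambda>\<phi>. \<phi> x) \<phi>s)"
  using P
proof (induction \<phi>s rule: rev_induct)
  case Nil then show ?case using wf by (intro exI[of _ "[]"]) (simp add: weight_def)
next
  case (snoc \<phi> \<phi>s)
  then obtain G where G: "wf_circuit k oms n (C @ G)" "weight G = 0" "length G = length \<phi>s"
     "\<forall>x\<in>tuples k n. node_vals oms (C @ G) x = node_vals oms C x @ map (\<lambda>\<phi>. \<phi> x) \<phi>s" by auto
  have P\<phi>: "\<forall>x\<in>tuples k n. \<phi> x < k" using snoc.prems by simp
  have c\<phi>: "\<forall>x\<in>tuples k n. \<forall>x'\<in>tuples k n.
        tle (node_vals oms (C @ G) x') (node_vals oms (C @ G) x) \<longrightarrow> \<phi> x' \<le> \<phi> x"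
  proof (intro ballI impI)
    fix x x' assume x: "x \<in> tuples k n" and x': "x' \<in> tuples k n"
      and t: "tle (node_vals oms (C @ G) x') (node_vals oms (C @ G) x)"
    have "length (node_vals oms C x') = length (node_vals oms C x)"
      using x x' by (simp add: nv_len tuples_def)
    then have "tle (node_vals oms C x') (node_vals oms C x)"
    proof -
      have "tle (node_vals oms C x' @ map (\<lambda>\<phi>. \<phi> x') \<phi>s) (node_vals oms C x @ map (\<lambda>\<phi>. \<phi> x) \<phi>s)"
        using t G(4) x x' by simp
      then show ?thesis using tle_prefix(1) \<open>length (node_vals oms C x') = length (node_vals oms C x)\<close>
        by blast
    qed
    then show "\<phi> x' \<le> \<phi> x" using snoc.prems x x' by simp
  qed
  obtain g where g: "wf_circuit k oms n ((C @ G) @ [(Mon g, [0..<n + length (C @ G)])])"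
    "\<forall>x\<in>tuples k n. node_vals oms ((C @ G) @ [(Mon g, [0..<n + length (C @ G)])]) x
       = node_vals oms (C @ G) x @ [\<phi> x]"
    using add_mon[OF G(1) k P\<phi> c\<phi>] by blast
  show ?case
    apply (rule exI[of _ "G @ [(Mon g, [0..<n + length (C @ G)])]"])
    using g G by (simp add: weight_append weight_def)
qed

lemma div_pow_Suc: "(x::nat) div u ^ Suc s = x div u ^ s div u"
  by (metis div_mult2_eq power_Suc2)

lemma ddiv_mod:
  fixes a b u s :: nat
  assumes "a \<le> b" "a div u ^ Suc s = b div u ^ Suc s"
  shows "a div u ^ s mod u \<le> b div u ^ s mod u"
proof -
  let ?a = "a div u ^ s" and ?b = "b div u ^ s"
  have le: "?a \<le> ?b" using assms(1) by (rule div_le_mono)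
  have eq: "?a div u = ?b div u" using assms(2) by (metis div_pow_Suc)
  obtain q0 where q0: "?a div u = q0" "?b div u = q0" using eq by auto
  have "?a = q0 * u + ?a mod u" using q0(1) by (metis div_mult_mod_eq)
  moreover have "?b = q0 * u + ?b mod u" using q0(2) by (metis div_mult_mod_eq)
  ultimately
  show ?thesis using le by linarith
qed

lemma ddiv_eq:
  fixes a b u s :: nat
  assumes "a div u ^ Suc s = b div u ^ Suc s" "a div u ^ s mod u = b div u ^ s mod u"
  shows "a div u ^ s = b div u ^ s"
proof -
  let ?a = "a div u ^ s" and ?b = "b div u ^ s"
  have eq: "?a div u = ?b div u" using assms(1) by (metis div_pow_Suc)
  obtain q0 where q0: "?a div u = q0" "?b div u = q0" using eq by auto
  have "?a = q0 * u + ?a mod u" using q0(1) by (metis div_mult_mod_eq)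
  moreover have "?b = q0 * u + ?b mod u" using q0(2) by (metis div_mult_mod_eq)
  ultimately show ?thesis using assms(2) by linarith
qed

lemma map_upt_append:
  assumes "length A = N" "length B = q"
  shows "map (\<lambda>m. (A @ B) ! m) [N..<N + q] = B"
  by (rule nth_equalityI) (use assms in \<open>auto simp: nth_append\<close>)

lemma step:
  assumes k: "1 \<le> k" and wf: "wf_circuit k oms n C"
    and i0: "i0 < length oms" "oms ! i0 = (q, w)"
    and ys: "length ys = u" "set ys \<subseteq> tuples k q" "sorted_wrt tle ys"
      "sorted_wrt (\<lambda>a b. w a > w b) ys"
    and Dm: "\<forall>x\<in>tuples k n. \<forall>x'\<in>tuples k n. tle x' x \<longrightarrow> D x' \<le> D x"
    and inv: "\<forall>x\<in>tuples k n. \<forall>x'\<in>tuples k n. tle (node_vals oms C x') (node_vals oms C x)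
        \<longrightarrow> D x' div u ^ Suc s = D x div u ^ Suc s"
    and u: "1 \<le> u"
  shows "\<exists>C'. wf_circuit k oms n C' \<and> weight C' = weight C + 1 \<and>
     (\<forall>x\<in>tuples k n. \<forall>x'\<in>tuples k n. tle (node_vals oms C' x') (node_vals oms C' x)
        \<longrightarrow> D x' div u ^ s = D x div u ^ s)"
proof -
  let ?T = "tuples k n"
  let ?V = "node_vals oms"
  define c where "c x = D x div u ^ s mod u" for x
  have cu: "c x < u" for x unfolding c_def using u by simp
  have ysT: "ys ! c x \<in> tuples k q" for x using ys(1,2) cu[of x] nth_mem by blast
  have lenT: "length x = n" if "x \<in> ?T" for x using that by (simp add: tuples_def)
  have tle_x: "tle x' x" if "x \<in> ?T" "x' \<in> ?T" "tle (?V C x') (?V C x)" for x x'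
  proof -
    have "list_all2 (\<le>) (take n (?V C x')) (take n (?V C x))"
      using that(3) unfolding tle_def by (rule list_all2_takeI)
    moreover have "take n (?V C x) = x" using nv_take[of x] lenT[OF that(1)] by simp
    moreover have "take n (?V C x') = x'" using nv_take[of x'] lenT[OF that(2)] by simp
    ultimately show ?thesis unfolding tle_def by simp
  qed
  have cle: "c x' \<le> c x" if "x \<in> ?T" "x' \<in> ?T" "tle (?V C x') (?V C x)" for x x'
  proof -
    have "D x' \<le> D x" using Dm that tle_x[OF that] by blast
    moreover have "D x' div u ^ Suc s = D x div u ^ Suc s" using inv[rule_format, OF that] .
    ultimately show ?thesis unfolding c_def by (rule ddiv_mod)
  qed
  have ystle: "tle (ys ! i) (ys ! j)" if "i \<le> j" "j < u" for i j
    using that ys(1,3) tle_refl by (cases "i = j") (auto simp: sorted_wrt_iff_nth_less)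
  define \<phi>s where "\<phi>s = map (\<lambda>j x. ys ! c x ! j) [0..<q]"
  have P: "\<forall>\<phi>\<in>set \<phi>s. (\<forall>x\<in>?T. \<phi> x < k) \<and> (\<forall>x\<in>?T. \<forall>x'\<in>?T.
        tle (?V C x') (?V C x) \<longrightarrow> \<phi> x' \<le> \<phi> x)"
  proof
    fix \<phi> assume "\<phi> \<in> set \<phi>s"
    then obtain j where j: "j < q" "\<phi> = (\<lambda>x. ys ! c x ! j)" unfolding \<phi>s_def by auto
    show "(\<forall>x\<in>?T. \<phi> x < k) \<and> (\<forall>x\<in>?T. \<forall>x'\<in>?T. tle (?V C x') (?V C x) \<longrightarrow> \<phi> x' \<le> \<phi> x)"
    proof (intro conjI ballI impI)
      fix x show "\<phi> x < k" using ysT[of x] j unfolding tuples_def by auto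
    next
      fix x x' assume "x \<in> ?T" "x' \<in> ?T" "tle (?V C x') (?V C x)"
      then have "c x' \<le> c x" using cle by blast
      then have "tle (ys ! c x') (ys ! c x)" using ystle cu by blast
      then show "\<phi> x' \<le> \<phi> x" using j ysT[of x'] unfolding tle_def tuples_def
        by (auto dest: list_all2_nthD)
    qed
  qed
  obtain G where G: "wf_circuit k oms n (C @ G)" "weight G = 0" "length G = length \<phi>s"
    "\<forall>x\<in>?T. ?V (C @ G) x = ?V C x @ map (\<lambda>\<phi>. \<phi> x) \<phi>s"
    using add_mons[OF wf k P] by blast
  have VG: "?V (C @ G) x = ?V C x @ ys ! c x" if "x \<in> ?T" for x
  proof -
    have "map (\<lambda>\<phi>. \<phi> x) \<phi>s = map (\<lambda>j. ys ! c x ! j) [0..<q]" unfolding \<phi>s_def by simp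
    also have "\<dots> = ys ! c x" using ysT[of x] map_nth[of "ys ! c x"] unfolding tuples_def by simp
    finally show ?thesis using G(4) that by simp
  qed
  define N where "N = n + length C"
  have lenV: "length (?V C x) = N" if "x \<in> ?T" for x using lenT[OF that] by (simp add: nv_len N_def)
  define C' where "C' = (C @ G) @ [(Om i0, [N..<N + q])]"
  have lenG: "length G = q" using G(3) unfolding \<phi>s_def by simp
  have wf': "wf_circuit k oms n C'" unfolding C'_def wf_snoc using G(1) i0 lenG by (auto simp: N_def)
  have VC': "?V C' x = ?V C x @ ys ! c x @ [w (ys ! c x)]" if "x \<in> ?T" for x
  proof -
    have "map (\<lambda>m. ?V (C @ G) x ! m) [N..<N + q] = ys ! c x"
      using VG[OF that] map_upt_append[OF lenV[OF that], of "ys ! c x" q] ysT[of x]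
      unfolding tuples_def by simp
    then show ?thesis unfolding C'_def nv_snoc using VG[OF that] i0 by simp
  qed
  show ?thesis
  proof (rule exI[of _ C'], intro conjI ballI impI)
    show "wf_circuit k oms n C'" by (rule wf')
    show "weight C' = weight C + 1" unfolding C'_def using G(2) by (simp add: weight_append weight_def)
    fix x x' assume x: "x \<in> ?T" and x': "x' \<in> ?T" and t: "tle (?V C' x') (?V C' x)"
    have l1: "length (?V C x') = length (?V C x)" using lenV x x' by simp
    have l2: "length (ys ! c x') = length (ys ! c x)" using ysT unfolding tuples_def by simp
    have t1: "tle (?V C x') (?V C x)" and t2: "tle (ys ! c x' @ [w (ys ! c x')]) (ys ! c x @ [w (ys ! c x)])"
      using tle_prefix[OF t[unfolded VC'[OF x] VC'[OF x']] l1] by auto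
    have t3: "tle [w (ys ! c x')] [w (ys ! c x)]" using tle_prefix(2)[OF t2 l2] .
    then have wle: "w (ys ! c x') \<le> w (ys ! c x)" unfolding tle_def by simp
    have "c x' \<le> c x" using cle x x' t1 by blast
    moreover have "\<not> c x' < c x"
    proof
      assume "c x' < c x"
      then have "w (ys ! c x') > w (ys ! c x)" using ys(4) ys(1) cu[of x] by (simp add: sorted_wrt_iff_nth_less)
      then show False using wle by simp
    qed
    ultimately have ceq: "c x' = c x" by simp
    have deq: "D x' div u ^ Suc s = D x div u ^ Suc s" using inv[rule_format, OF x x' t1] .
    show "D x' div u ^ s = D x div u ^ s" using ddiv_eq[OF deq ceq[unfolded c_def]] .
  qed
qed

lemma nv_tle:
  assumes "x \<in> tuples k n" "x' \<in> tuples k n" "tle (node_vals oms C x') (node_vals oms C x)"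
  shows "tle x' x"
proof -
  have "list_all2 (\<le>) (take n (node_vals oms C x')) (take n (node_vals oms C x))"
    using assms(3) unfolding tle_def by (rule list_all2_takeI)
  moreover have "take n (node_vals oms C x) = x" using nv_take[of x] assms(1) by (simp add: tuples_def)
  moreover have "take n (node_vals oms C x') = x'" using nv_take[of x'] assms(2) by (simp add: tuples_def)
  ultimately show ?thesis unfolding tle_def by simp
qed

lemma finish:
  assumes k: "1 \<le> k" and wf: "wf_circuit k oms n C" and fs: "set fs = F"
    and vals: "\<forall>f\<in>F. \<forall>x\<in>tuples k n. f x < k"
    and cond: "\<forall>f\<in>F. \<forall>x\<in>tuples k n. \<forall>x'\<in>tuples k n.
        tle (node_vals oms C x') (node_vals oms C x) \<longrightarrow> f x' \<le> f x"
  shows "\<exists>C'. wf_circuit k oms n C' \<and> weight C' = weight C \<and> realizes k oms n C' F"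
proof -
  have P: "\<forall>\<phi>\<in>set fs. (\<forall>x\<in>tuples k n. \<phi> x < k) \<and> (\<forall>x\<in>tuples k n. \<forall>x'\<in>tuples k n.
        tle (node_vals oms C x') (node_vals oms C x) \<longrightarrow> \<phi> x' \<le> \<phi> x)"
    using vals cond fs by blast
  obtain G where G: "wf_circuit k oms n (C @ G)" "weight G = 0" "length G = length fs"
     "\<forall>x\<in>tuples k n. node_vals oms (C @ G) x = node_vals oms C x @ map (\<lambda>\<phi>. \<phi> x) fs"
    using add_mons[OF wf k P] by blast
  have "realizes k oms n (C @ G) F" unfolding realizes_def
  proof
    fix f assume "f \<in> F"
    then obtain j where j: "j < length fs" "fs ! j = f" using fs by (metis in_set_conv_nth)
    show "\<exists>m<n + length (C @ G). \<forall>x\<in>tuples k n. node_vals oms (C @ G) x ! m = f x"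
    proof (intro exI conjI ballI)
      show "n + length C + j < n + length (C @ G)" using j G(3) by simp
      fix x assume x: "x \<in> tuples k n"
      have l: "length (node_vals oms C x) = n + length C" using x by (simp add: nv_len tuples_def)
      show "node_vals oms (C @ G) x ! (n + length C + j) = f x"
        using G(4) x l j by (simp add: nth_append)
    qed
  qed
  then show ?thesis using G by (intro exI[of _ "C @ G"]) (simp add: weight_append)
qed

lemma pow_bound:
  fixes u d :: nat
  assumes "2 \<le> u"
  shows "d + 1 \<le> u ^ nat \<lceil>log (real u) (real d + 1)\<rceil>" and "0 \<le> \<lceil>log (real u) (real d + 1)\<rceil>"
proof -
  have u: "1 < real u" using assms by simp
  have l0: "0 \<le> log (real u) (real d + 1)" using u by simp
  then show "0 \<le> \<lceil>log (real u) (real d + 1)\<rceil>" by simp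
  let ?t = "nat \<lceil>log (real u) (real d + 1)\<rceil>"
  have "log (real u) (real d + 1) \<le> real ?t" using l0 by linarith
  then have "real u powr log (real u) (real d + 1) \<le> real u powr real ?t"
    using u by (intro powr_mono) auto
  also have "\<dots> = real u ^ ?t" by (rule powr_realpow) (use u in simp)
  finally have "real d + 1 \<le> real u ^ ?t" using u by simp
  then show "d + 1 \<le> u ^ ?t" by (metis of_nat_1 of_nat_add of_nat_le_iff of_nat_power)
qed

theorem theorem2:
  fixes k n :: nat
    and oms :: "(nat \<times> (nat list \<Rightarrow> nat)) list"
    and F :: "(nat list \<Rightarrow> nat) set"
  assumes "k \<ge> 2"
    and "length oms \<ge> 1"
    and "\<forall>(q, w) \<in> set oms. in_Pk k q w \<and> \<not> monotone_k k q w"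
    and "finite F"
    and "\<forall>f\<in>F. in_Pk k n f"
  shows "(\<exists>C. wf_circuit k oms n C \<and> realizes k oms n C F) \<and>
         int (complexity k oms n F)
           \<le> \<lceil>log (real (inv_power_basis k oms)) (real (decrease k n F) + 1)\<rceil>"
proof -
  have k: "1 \<le> k" using assms(1) by simp
  have "oms \<noteq> []" using assms(2) by auto
  then obtain i0 q w ys where om: "i0 < length oms" "oms ! i0 = (q, w)"
    "length ys = inv_power_basis k oms" "set ys \<subseteq> tuples k q" "sorted_wrt tle ys"
    "sorted_wrt (\<lambda>a b. w a > w b) ys" "2 \<le> inv_power_basis k oms"
    using get_omega[OF assms(3)] by blast
  define u where "u = inv_power_basis k oms"
  define d where "d = decrease k n F"
  define t where "t = nat \<lceil>log (real u) (real d + 1)\<rceil>"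
  define D where "D = Dv k n F"
  let ?T = "tuples k n"
  let ?V = "node_vals oms"
  have u2: "2 \<le> u" using om(7) u_def by simp
  have dut: "d + 1 \<le> u ^ t" unfolding t_def using pow_bound(1)[OF u2] .
  have tint: "int t = \<lceil>log (real u) (real d + 1)\<rceil>" unfolding t_def using pow_bound(2)[OF u2] by simp
  have Dlt: "D x < u ^ t" if "x \<in> ?T" for x
    using Dv_le[OF that, of F] dut unfolding D_def d_def by simp
  have Dm: "\<forall>x\<in>?T. \<forall>x'\<in>?T. tle x' x \<longrightarrow> D x' \<le> D x" unfolding D_def using Dv_mono by blast
  have main: "\<exists>C. wf_circuit k oms n C \<and> weight C = i \<and>
     (\<forall>x\<in>?T. \<forall>x'\<in>?T. tle (?V C x') (?V C x) \<longrightarrow> D x' div u ^ (t - i) = D x div u ^ (t - i))"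
    if "i \<le> t" for i
    using that
  proof (induction i)
    case 0
    show ?case
    proof (rule exI[of _ "[]"], intro conjI ballI impI)
      show "wf_circuit k oms n []" unfolding wf_circuit_def by simp
      show "weight [] = 0" unfolding weight_def by simp
      fix x x' assume "x \<in> ?T" "x' \<in> ?T"
      then show "D x' div u ^ (t - 0) = D x div u ^ (t - 0)" using Dlt by simp
    qed
  next
    case (Suc i)
    then obtain C where C: "wf_circuit k oms n C" "weight C = i"
      "\<forall>x\<in>?T. \<forall>x'\<in>?T. tle (?V C x') (?V C x) \<longrightarrow> D x' div u ^ (t - i) = D x div u ^ (t - i)"
      by auto
    have e: "t - i = Suc (t - Suc i)" using Suc.prems by simp
    have inv: "\<forall>x\<in>?T. \<forall>x'\<in>?T. tle (?V C x') (?V C x) \<longrightarrow>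
       D x' div u ^ Suc (t - Suc i) = D x div u ^ Suc (t - Suc i)"
      using C(3) unfolding e .
    have "1 \<le> u" using u2 by simp
    then obtain C' where "wf_circuit k oms n C'" "weight C' = weight C + 1"
      "\<forall>x\<in>?T. \<forall>x'\<in>?T. tle (?V C' x') (?V C' x) \<longrightarrow>
        D x' div u ^ (t - Suc i) = D x div u ^ (t - Suc i)"
      using step[OF k C(1) om(1,2) om(3)[folded u_def] om(4,5,6) Dm inv] by blast
    then show ?case using C(2) by auto
  qed
  obtain C where C: "wf_circuit k oms n C" "weight C = t"
    "\<forall>x\<in>?T. \<forall>x'\<in>?T. tle (?V C x') (?V C x) \<longrightarrow> D x' div u ^ (t - t) = D x div u ^ (t - t)"
    using main[of t] by blast
  obtain fs where fs: "set fs = F" using finite_list[OF assms(4)] by blast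
  have vals: "\<forall>f\<in>F. \<forall>x\<in>?T. f x < k" using assms(5) unfolding in_Pk_def by blast
  have cond: "\<forall>f\<in>F. \<forall>x\<in>?T. \<forall>x'\<in>?T. tle (?V C x') (?V C x) \<longrightarrow> f x' \<le> f x"
  proof (intro ballI impI)
    fix f x x' assume f: "f \<in> F" and x: "x \<in> ?T" and x': "x' \<in> ?T" and t: "tle (?V C x') (?V C x)"
    have eq: "D x' = D x" using C(3) x x' t by simp
    have le: "tle x' x" using nv_tle[OF x x' t] .
    show "f x' \<le> f x"
    proof (rule ccontr)
      assume "\<not> f x' \<le> f x"
      then have "f x < f x'" by simp
      then have "is_jump F x' x" unfolding is_jump_def using le f by blast
      then have "D x' < D x" unfolding D_def using Dv_jump[OF x x'] by blast
      then show False using eq by simp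
    qed
  qed
  obtain C' where C': "wf_circuit k oms n C'" "weight C' = t" "realizes k oms n C' F"
    using finish[OF k C(1) fs vals cond] C(2) by auto
  have "complexity k oms n F \<le> t" unfolding complexity_def
    by (rule Least_le) (use C' in blast)
  then have "int (complexity k oms n F) \<le> int t" by simp
  then have "int (complexity k oms n F) \<le> \<lceil>log (real (inv_power_basis k oms)) (real (decrease k n F) + 1)\<rceil>"
    using tint unfolding u_def d_def by linarith
  then show ?thesis using C'(1,3) by blast
qed

end
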